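(* Fix $n\ge1$, $\tilde J>0$, an integer $0\le m\le n-1$ and $\alpha\in(0,1)$, and let $h=\tilde J(n-m-\alpha)$. For $N\ge2$ let $J_i=\tilde J/N^i$, $1\le i\le n$. Then $$\Gamma^\star=\big[1+o_N(1)\big]\,\frac{\tilde J}{4}\,\alpha^2\,N^{m+1},\qquad N\to\infty.$$
   Context: Hierarchical lattice $\Lambda_N^n=\{1,\dots,N^n\}$; $k$-blocks are $\{jN^k+1,\dots,(j+1)N^k\}$; $d(a,b)$ is the smallest $k\ge0$ with $a,b$ in a common $k$-block. Configurations $\sigma\in\{-1,+1\}^{\Lambda_N^n}$, $\boxminus\equiv-1$, $\boxplus\equiv+1$. Hamiltonian $\mathcal H(\sigma)=-\frac12\sum_{\{v,w\},v\ne w}J_{d(v,w)}\sigma(v)\sigma(w)-\frac h2\sum_v\sigma(v)$ (sum over unordered pairs of distinct vertices). Paths consist of single spin flips; $\Phi(\sigma,\eta)=\min_{\text{paths }\sigma\to\eta}\max_{\xi\in\text{path}}\mathcal H(\xi)$; $\Gamma^\star=\Phi(\boxminus,\boxplus)-\mathcal H(\boxminus)$. *)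

theory Defs
  imports Complex_Main "HOL-Library.Landau_Symbols"
begin

text \<open>Hierarchical lattice {1..N^n}; a configuration is represented by the set of
  sites carrying spin +1 (all other sites of the lattice carry spin -1).\<close>

definition lattice :: "nat \<Rightarrow> nat \<Rightarrow> nat set" where
  "lattice N n = {1..N ^ n}"

definition kblock :: "nat \<Rightarrow> nat \<Rightarrow> nat \<Rightarrow> nat set" where
  "kblock N k j = {j * N ^ k + 1 .. (j + 1) * N ^ k}"

definition hdist :: "nat \<Rightarrow> nat \<Rightarrow> nat \<Rightarrow> nat" where
  "hdist N a b = (LEAST k. \<exists>j. a \<in> kblock N k j \<and> b \<in> kblock N k j)"

definition spin :: "nat set \<Rightarrow> nat \<Rightarrow> real" where
  "spin A v = (if v \<in> A then 1 else -1)"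

text \<open>Hamiltonian; sum over unordered pairs of distinct vertices (encoded as v < w).\<close>
definition Ham :: "nat \<Rightarrow> nat \<Rightarrow> (nat \<Rightarrow> real) \<Rightarrow> real \<Rightarrow> nat set \<Rightarrow> real" where
  "Ham N n J h A =
     - (1/2) * (\<Sum>(v,w)\<in>{(v,w). v \<in> lattice N n \<and> w \<in> lattice N n \<and> v < w}.
                   J (hdist N v w) * spin A v * spin A w)
     - (h/2) * (\<Sum>v\<in>lattice N n. spin A v)"

definition is_path :: "nat \<Rightarrow> nat \<Rightarrow> nat set \<Rightarrow> nat set \<Rightarrow> nat set list \<Rightarrow> bool" where
  "is_path N n A B p \<longleftrightarrow> p \<noteq> [] \<and> hd p = A \<and> last p = B \<and>
     (\<forall>C\<in>set p. C \<subseteq> lattice N n) \<and>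
     (\<forall>i. Suc i < length p \<longrightarrow>
        (\<exists>v\<in>lattice N n. p ! Suc i = p ! i - {v} \<union> ({v} - p ! i)))"

definition Phi :: "nat \<Rightarrow> nat \<Rightarrow> (nat \<Rightarrow> real) \<Rightarrow> real \<Rightarrow> nat set \<Rightarrow> nat set \<Rightarrow> real" where
  "Phi N n J h A B = Inf {Max (Ham N n J h ` set p) | p. is_path N n A B p}"

definition Gamma_star :: "nat \<Rightarrow> nat \<Rightarrow> (nat \<Rightarrow> real) \<Rightarrow> real \<Rightarrow> real" where
  "Gamma_star N n J h = Phi N n J h {} (lattice N n) - Ham N n J h {}"

end

theory Submission
  imports Defs
begin

lemma kblock_mem:
  assumes "N \<ge> 1" "v \<ge> 1"
  shows "v \<in> kblock N k j \<longleftrightarrow> (v-1) div N^k = j"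
proof -
  have p: "N^k > 0" using assms by simp
  have "v \<in> kblock N k j \<longleftrightarrow> j * N^k \<le> v - 1 \<and> v - 1 < (j+1) * N^k"
    using assms unfolding kblock_def by auto
  also have "\<dots> \<longleftrightarrow> (v-1) div N^k = j"
  proof
    assume "j * N^k \<le> v - 1 \<and> v - 1 < (j+1) * N^k"
    then show "(v-1) div N^k = j" by (intro div_nat_eqI) (auto simp: mult.commute)
  next
    assume h: "(v-1) div N^k = j"
    have "N^k * ((v-1) div N^k) \<le> v - 1" by simp
    moreover have "v - 1 < N^k * Suc ((v-1) div N^k)"
    proof -
      have "v - 1 = N^k * ((v-1) div N^k) + (v-1) mod N^k" by simp
      moreover have "(v-1) mod N^k < N^k" using p by simp
      ultimately show ?thesis unfolding mult_Suc_right by linarith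
    qed
    ultimately show "j * N^k \<le> v - 1 \<and> v - 1 < (j+1) * N^k" using h by (auto simp: mult.commute)
  qed
  finally show ?thesis .
qed

lemma div_pow_mono:
  fixes x y N :: nat
  assumes "k' \<le> k" "x div N^k' = y div N^k'"
  shows "x div N^k = y div N^k"
proof -
  have "N^k = N^k' * N^(k-k')" using assms(1) by (metis le_add_diff_inverse power_add)
  then show ?thesis using assms(2) by (simp only: div_mult2_eq)
qed

lemma lt_pow_self: "(N::nat) \<ge> 2 \<Longrightarrow> x < N ^ x"
proof -
  assume "N \<ge> 2"
  then have "2^x \<le> N^x" by (intro power_mono) auto
  moreover have "x < 2^x" by (rule less_exp)
  ultimately show ?thesis by linarith
qed

lemma hdist_alt:
  assumes "N \<ge> 2" "v \<ge> 1" "w \<ge> 1"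
  shows "hdist N v w = (LEAST k. (v-1) div N^k = (w-1) div N^k)"
proof -
  have eq: "(\<exists>j. v \<in> kblock N k j \<and> w \<in> kblock N k j) = ((v-1) div N^k = (w-1) div N^k)" for k
  proof -
    have a: "\<And>j. v \<in> kblock N k j \<longleftrightarrow> (v-1) div N^k = j" using kblock_mem[of N v] assms by simp
    have b: "\<And>j. w \<in> kblock N k j \<longleftrightarrow> (w-1) div N^k = j" using kblock_mem[of N w] assms by simp
    show ?thesis unfolding a b by auto
  qed
  show ?thesis unfolding hdist_def eq ..
qed

lemma hdist_le_iff:
  assumes "N \<ge> 2" "v \<ge> 1" "w \<ge> 1"
  shows "hdist N v w \<le> k \<longleftrightarrow> (v-1) div N^k = (w-1) div N^k"
proof -
  let ?P = "\<lambda>k. (v-1) div N^k = (w-1) div N^k"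
  have ex: "?P (v+w)"
  proof -
    have "v - 1 < N^(v+w)" using lt_pow_self[OF assms(1), of "v+w"] by linarith
    moreover have "w - 1 < N^(v+w)" using lt_pow_self[OF assms(1), of "v+w"] by linarith
    ultimately show ?thesis by simp
  qed
  have "(LEAST k. ?P k) \<le> k \<longleftrightarrow> ?P k"
  proof
    assume "(LEAST k. ?P k) \<le> k"
    moreover have "?P (LEAST k. ?P k)" using ex by (rule LeastI)
    ultimately show "?P k" by (rule div_pow_mono)
  next
    assume "?P k" then show "(LEAST k. ?P k) \<le> k" by (rule Least_le)
  qed
  then show ?thesis using hdist_alt[OF assms] by simp
qed

lemma hdist_sym: "hdist N v w = hdist N w v"
  unfolding hdist_def by (simp add: conj_commute)

lemma hdist_ge1:
  assumes "N \<ge> 2" "v \<ge> 1" "w \<ge> 1" "v \<noteq> w"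
  shows "hdist N v w \<ge> 1"
proof (rule ccontr)
  assume "\<not> hdist N v w \<ge> 1"
  then have "hdist N v w \<le> 0" by simp
  then have "v - 1 = w - 1" using hdist_le_iff[OF assms(1-3), of 0] by simp
  then show False using assms by simp
qed

lemma hdist_len:
  assumes "N \<ge> 2" "v \<in> lattice N n" "w \<in> lattice N n"
  shows "hdist N v w \<le> n"
proof -
  have v: "v \<ge> 1" "v - 1 < N^n" and w: "w \<ge> 1" "w - 1 < N^n"
    using assms(2,3) unfolding lattice_def by auto
  then have "(v-1) div N^n = (w-1) div N^n" by simp
  then show ?thesis using hdist_le_iff[OF assms(1) v(1) w(1)] by blast
qed

lemma finite_lattice[simp]: "finite (lattice N n)" by (simp add: lattice_def)

lemma E_formula:
  assumes AL: "A \<subseteq> lattice N n"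
  shows "Ham N n J h A - Ham N n J h {} =
         (\<Sum>(v,w)\<in>A \<times> (lattice N n - A). J (hdist N v w)) - h * card A"
proof -
  define L where "L = lattice N n"
  define P where "P = {(v,w). v \<in> L \<and> w \<in> L \<and> v < w}"
  define g where "g = (\<lambda>(v,w). J (hdist N v w))"
  have fL: "finite L" by (simp add: L_def)
  have fP: "finite P" unfolding P_def by (rule finite_subset[of _ "L \<times> L"]) (auto simp: fL)
  have s1: "(\<Sum>v\<in>L. spin A v) - (\<Sum>v\<in>L. spin {} v) = 2 * real (card A)"
  proof -
    have "(\<Sum>v\<in>L. spin A v) - (\<Sum>v\<in>L. spin {} v) = (\<Sum>v\<in>L. if v \<in> A then 2 else 0)"
      unfolding sum_subtractf[symmetric] by (intro sum.cong) (auto simp: spin_def)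
    also have "\<dots> = (\<Sum>v\<in>L \<inter> A. 2)" by (simp add: sum.If_cases fL)
    also have "L \<inter> A = A" using AL L_def by auto
    finally show ?thesis by simp
  qed
  have s2: "(\<Sum>(v,w)\<in>P. J (hdist N v w) * spin A v * spin A w)
      - (\<Sum>(v,w)\<in>P. J (hdist N v w) * spin {} v * spin {} w)
      = -2 * ((\<Sum>x\<in>{x\<in>P. fst x \<in> A \<and> snd x \<notin> A}. g x) + (\<Sum>x\<in>{x\<in>P. fst x \<notin> A \<and> snd x \<in> A}. g x))"
  proof -
    have "(\<Sum>(v,w)\<in>P. J (hdist N v w) * spin A v * spin A w)
      - (\<Sum>(v,w)\<in>P. J (hdist N v w) * spin {} v * spin {} w)
      = (\<Sum>x\<in>P. -2 * ((if fst x \<in> A \<and> snd x \<notin> A then g x else 0) + (if fst x \<notin> A \<and> snd x \<in> A then g x else 0)))"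
      unfolding sum_subtractf[symmetric] by (intro sum.cong) (auto simp: spin_def g_def split_beta)
    also have "\<dots> = -2 * ((\<Sum>x\<in>P. if fst x \<in> A \<and> snd x \<notin> A then g x else 0) + (\<Sum>x\<in>P. if fst x \<notin> A \<and> snd x \<in> A then g x else 0))"
      by (simp only: sum_distrib_left[symmetric] sum.distrib)
    also have "\<dots> = -2 * ((\<Sum>x\<in>{x\<in>P. fst x \<in> A \<and> snd x \<notin> A}. g x) + (\<Sum>x\<in>{x\<in>P. fst x \<notin> A \<and> snd x \<in> A}. g x))"
      by (simp add: sum.inter_filter fP)
    finally show ?thesis .
  qed
  define Q1 where "Q1 = {(x,y). x \<in> A \<and> y \<in> L - A \<and> x < y}"
  define Q2 where "Q2 = {(x,y). x \<in> A \<and> y \<in> L - A \<and> y < x}"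
  have P1: "{x\<in>P. fst x \<in> A \<and> snd x \<notin> A} = Q1" using AL unfolding P_def Q1_def L_def by auto
  have P2: "{x\<in>P. fst x \<notin> A \<and> snd x \<in> A} = prod.swap ` Q2" using AL unfolding P_def Q2_def L_def by auto
  have fQ: "finite (A \<times> (L - A))" using AL fL by (simp add: finite_subset)
  have U: "A \<times> (L - A) = Q1 \<union> Q2" unfolding Q1_def Q2_def using less_linear by fastforce
  have fQ1: "finite Q1" using fQ U by (metis finite_Un)
  have fQ2: "finite Q2" using fQ U by (metis finite_Un)
  have "(\<Sum>x\<in>prod.swap ` Q2. g x) = (\<Sum>x\<in>Q2. g (prod.swap x))"
    using sum.reindex[of prod.swap Q2 g] by (simp add: o_def)
  also have "\<dots> = (\<Sum>x\<in>Q2. g x)" unfolding g_def by (simp add: split_beta hdist_sym)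
  finally have sw: "(\<Sum>x\<in>prod.swap ` Q2. g x) = (\<Sum>x\<in>Q2. g x)" .
  have "(\<Sum>x\<in>A \<times> (L - A). g x) = (\<Sum>x\<in>Q1. g x) + (\<Sum>x\<in>Q2. g x)"
    unfolding U by (rule sum.union_disjoint[OF fQ1 fQ2]) (auto simp: Q1_def Q2_def)
  have main: "Ham N n J h A - Ham N n J h {} =
     - (1/2) * ((\<Sum>(v,w)\<in>P. J (hdist N v w) * spin A v * spin A w)
      - (\<Sum>(v,w)\<in>P. J (hdist N v w) * spin {} v * spin {} w))
     - (h/2) * ((\<Sum>v\<in>L. spin A v) - (\<Sum>v\<in>L. spin {} v))"
    unfolding Ham_def P_def L_def by (simp add: algebra_simps)
  show ?thesis
    unfolding main s1 s2 P1 P2 sw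
    using \<open>(\<Sum>x\<in>A \<times> (L - A). g x) = (\<Sum>x\<in>Q1. g x) + (\<Sum>x\<in>Q2. g x)\<close>
    by (simp add: L_def g_def field_simps)
qed

lemma ball_eq:
  assumes N2: "N \<ge> 2" and v: "v \<in> lattice N n" and kn: "k \<le> n"
  shows "{w \<in> lattice N n. hdist N v w \<le> k} = kblock N k ((v-1) div N^k)"
proof -
  let ?q = "(v-1) div N^k"
  have v1: "v \<ge> 1" "v - 1 < N^n" using v by (auto simp: lattice_def)
  have pk: "N^k > 0" using N2 by simp
  have "N^n = N^(n-k) * N^k" using kn by (metis le_add_diff_inverse2 power_add)
  then have "?q < N^(n-k)" using v1 pk by (metis less_mult_imp_div_less)
  then have "?q + 1 \<le> N^(n-k)" by simp
  then have "(?q + 1) * N^k \<le> N^(n-k) * N^k" by (rule mult_right_mono) simp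
  then have top: "(?q + 1) * N^k \<le> N^n" using \<open>N^n = N^(n-k) * N^k\<close> by simp
  have sub: "kblock N k ?q \<subseteq> lattice N n"
    using top unfolding kblock_def lattice_def by auto
  show ?thesis
  proof (intro set_eqI iffI)
    fix w assume "w \<in> {w \<in> lattice N n. hdist N v w \<le> k}"
    then have w: "w \<in> lattice N n" "hdist N v w \<le> k" by auto
    then have "w \<ge> 1" by (simp add: lattice_def)
    then have "(w-1) div N^k = ?q" using w(2) hdist_le_iff[OF N2 v1(1)] by simp
    then show "w \<in> kblock N k ?q" using kblock_mem[of N w] N2 \<open>w \<ge> 1\<close> by simp
  next
    fix w assume w: "w \<in> kblock N k ?q"
    then have wl: "w \<in> lattice N n" using sub by auto
    then have "w \<ge> 1" by (simp add: lattice_def)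
    then have "(w-1) div N^k = ?q" using w kblock_mem[of N w] N2 by simp
    then show "w \<in> {w \<in> lattice N n. hdist N v w \<le> k}"
      using wl hdist_le_iff[OF N2 v1(1) \<open>w \<ge> 1\<close>] by simp
  qed
qed

lemma card_kblock: "card (kblock N k j) = N^k"
  unfolding kblock_def by simp

lemma ball_card:
  assumes "N \<ge> 2" "v \<in> lattice N n" "k \<le> n"
  shows "card {w \<in> lattice N n. hdist N v w \<le> k} = N^k"
  using ball_eq[OF assms] card_kblock by simp

lemma geo_tail:
  assumes N2: "N \<ge> 2" and dn: "d \<le> n"
  shows "(\<Sum>k\<in>{d..n}. 1 / real N^k * (1 - 1/real N)) \<le> 1 / real N^d"
proof -
  define x where "x = 1 / real N"
  have x0: "x \<ge> 0" unfolding x_def by simp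
  have "(\<Sum>k\<in>{d..n}. 1 / real N^k * (1 - 1/real N)) = (1 - x) * (\<Sum>k\<in>{d..n}. x^k)"
    unfolding x_def by (simp add: sum_distrib_left power_one_over mult.commute)
  also have "\<dots> = x^d - x^Suc n" using sum_gp_multiplied[OF dn] by simp
  also have "\<dots> \<le> x^d" using x0 by simp
  finally show ?thesis unfolding x_def by (simp add: power_one_over)
qed

lemma J_lower:
  assumes N2: "N \<ge> 2" and Jt: "Jt > 0"
  shows "(\<Sum>k\<in>{m+1..n}. if d \<le> k then Jt / real N^k * (1 - 1/real N) else 0) \<le> Jt / real N^d"
proof -
  have c0: "\<And>k. Jt / real N^k * (1 - 1/real N) \<ge> 0" using N2 Jt by (simp add: field_simps)
  have "(\<Sum>k\<in>{m+1..n}. if d \<le> k then Jt / real N^k * (1 - 1/real N) else 0)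
      = (\<Sum>k\<in>{k\<in>{m+1..n}. d \<le> k}. Jt / real N^k * (1 - 1/real N))"
    by (subst sum.inter_filter) auto
  also have "\<dots> \<le> (\<Sum>k\<in>{d..n}. Jt / real N^k * (1 - 1/real N))"
    by (rule sum_mono2) (use c0 in auto)
  also have "\<dots> \<le> Jt / real N^d"
  proof (cases "d \<le> n")
    case True
    have "(\<Sum>k\<in>{d..n}. Jt / real N^k * (1 - 1/real N)) = Jt * (\<Sum>k\<in>{d..n}. 1 / real N^k * (1 - 1/real N))"
      by (simp add: sum_distrib_left)
    also have "\<dots> \<le> Jt * (1 / real N^d)"
      using geo_tail[OF N2 True] Jt by (intro mult_left_mono) auto
    finally show ?thesis by simp
  next
    case False
    then show ?thesis using Jt by simp
  qed
  finally show ?thesis .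
qed

lemma inner_lower:
  assumes N2: "N \<ge> 2" and AL: "A \<subseteq> lattice N n" and aM: "card A \<le> N^(m+1)"
    and mn: "m + 1 \<le> n" and vA: "v \<in> A" and Jt: "Jt > 0"
  shows "Jt * (real n - real m - real (card A) / real N^(m+1) - 2 * real n / real N)
         \<le> (\<Sum>w\<in>lattice N n - A. Jt / real N ^ hdist N v w)"
proof -
  define L where "L = lattice N n"
  define a where "a = card A"
  define c where "c = (\<lambda>k. Jt / real N^k * (1 - 1/real N))"
  have fL: "finite L" by (simp add: L_def)
  have vL: "v \<in> L" using vA AL L_def by auto
  have Nr: "real N \<ge> 2" using N2 by simp
  have "(\<Sum>w\<in>L - A. \<Sum>k\<in>{m+1..n}. if hdist N v w \<le> k then c k else 0)
        \<le> (\<Sum>w\<in>L - A. Jt / real N ^ hdist N v w)"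
    by (rule sum_mono) (unfold c_def, rule J_lower[OF N2 Jt])
  moreover have "(\<Sum>w\<in>L - A. \<Sum>k\<in>{m+1..n}. if hdist N v w \<le> k then c k else 0)
      = (\<Sum>k\<in>{m+1..n}. c k * real (card {w \<in> L - A. hdist N v w \<le> k}))"
  proof -
    have "(\<Sum>w\<in>L - A. \<Sum>k\<in>{m+1..n}. if hdist N v w \<le> k then c k else 0)
       = (\<Sum>k\<in>{m+1..n}. \<Sum>w\<in>L - A. if hdist N v w \<le> k then c k else 0)"
      by (rule sum.swap)
    also have "\<dots> = (\<Sum>k\<in>{m+1..n}. c k * real (card {w \<in> L - A. hdist N v w \<le> k}))"
    proof (rule sum.cong[OF refl])
      fix k
      have "(\<Sum>w\<in>L - A. if hdist N v w \<le> k then c k else 0) = (\<Sum>w\<in>{w \<in> L - A. hdist N v w \<le> k}. c k)"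
        using fL by (subst sum.inter_filter) auto
      then show "(\<Sum>w\<in>L - A. if hdist N v w \<le> k then c k else 0) = c k * real (card {w \<in> L - A. hdist N v w \<le> k})"
        by simp
    qed
    finally show ?thesis .
  qed
  moreover have "(\<Sum>k\<in>{m+1..n}. (if k = m+1 then Jt * (1 - real a / real N^(m+1) - 1/real N) else Jt * (1 - 2/real N)))
      \<le> (\<Sum>k\<in>{m+1..n}. c k * real (card {w \<in> L - A. hdist N v w \<le> k}))"
  proof (rule sum_mono)
    fix k assume k: "k \<in> {m+1..n}"
    have Nk: "real N^k > 0" using N2 by simp
    have aNk: "a \<le> N^k"
    proof -
      have "N^(m+1) \<le> N^k" using k N2 by (intro power_increasing) auto
      then show ?thesis using aM a_def by simp
    qed
    have "N^k - a \<le> card ({w \<in> L. hdist N v w \<le> k} - A)"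
      using diff_card_le_card_Diff[of A "{w \<in> L. hdist N v w \<le> k}"] ball_card[OF N2 vL[unfolded L_def], of k] k
        AL fL a_def L_def by (simp add: finite_subset)
    moreover have "{w \<in> L. hdist N v w \<le> k} - A = {w \<in> L - A. hdist N v w \<le> k}" by auto
    ultimately have cardk: "real N^k - real a \<le> real (card {w \<in> L - A. hdist N v w \<le> k})"
      using aNk by (metis of_nat_diff of_nat_le_iff of_nat_power)
    have c0: "c k \<ge> 0" unfolding c_def using N2 Jt by (simp add: field_simps)
    have "c k * (real N^k - real a) \<le> c k * real (card {w \<in> L - A. hdist N v w \<le> k})"
      using cardk c0 by (rule mult_left_mono)
    moreover have "c k * (real N^k - real a) = Jt * (1 - 1/real N) * (1 - real a / real N^k)"
      unfolding c_def using Nk by (simp add: field_simps)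
    moreover have "Jt * (1 - 1/real N) * (1 - real a / real N^k) \<ge> Jt * (1 - real a / real N^k - 1/real N)"
    proof -
      define t where "t = real a / real N^k"
      have "t / real N \<ge> 0" unfolding t_def by simp
      moreover have "(1 - 1/real N) * (1 - t) = 1 - t - 1/real N + t / real N" by (simp add: algebra_simps add_divide_distrib[symmetric])
      ultimately have "(1 - 1/real N) * (1 - real a / real N^k) \<ge> 1 - real a / real N^k - 1/real N"
        unfolding t_def by linarith
      then show ?thesis using Jt by simp
    qed
    moreover have "(if k = m+1 then Jt * (1 - real a / real N^(m+1) - 1/real N) else Jt * (1 - 2/real N))
        \<le> Jt * (1 - real a / real N^k - 1/real N)"
    proof (cases "k = m+1")
      case True then show ?thesis by simp
    next
      case False
      then have k2: "k \<ge> m+2" using k by auto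
      have ke: "k = (m+1) + (k-m-1)" using k2 by simp
      have "real N^k = real N^(m+1) * real N^(k-m-1)" by (subst ke) (rule power_add)
      moreover have "real N^1 \<le> real N^(k-m-1)" by (rule power_increasing) (use k2 Nr in auto)
      then have "real N^(k-m-1) \<ge> real N" by simp
      ultimately have "real N^k \<ge> real N^(m+1) * real N"
        by (metis mult_left_mono zero_le_power of_nat_0_le_iff)
      moreover have "real a \<le> real N^(m+1)" using aM a_def by (metis of_nat_le_iff of_nat_power)
      ultimately have "real a / real N^k \<le> real N^(m+1) / (real N^(m+1) * real N)"
        by (intro frac_le) (use Nr in auto)
      also have "\<dots> = 1 / real N" using Nr by simp
      finally have "real a / real N^k \<le> 1 / real N" .
      moreover have "2 / real N = 1 / real N + 1 / real N" by simp
      ultimately have "1 - 2 / real N \<le> 1 - real a / real N^k - 1/real N" by linarith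
      then have "Jt * (1 - 2 / real N) \<le> Jt * (1 - real a / real N^k - 1/real N)"
        using Jt by (intro mult_left_mono) auto
      then show ?thesis using False by simp
    qed
    ultimately show "(if k = m+1 then Jt * (1 - real a / real N^(m+1) - 1/real N) else Jt * (1 - 2/real N))
      \<le> c k * real (card {w \<in> L - A. hdist N v w \<le> k})" by linarith
  qed
  moreover have "(\<Sum>k\<in>{m+1..n}. (if k = m+1 then Jt * (1 - real a / real N^(m+1) - 1/real N) else Jt * (1 - 2/real N)))
     = Jt * (1 - real a / real N^(m+1) - 1/real N) + real (n - (m+1)) * (Jt * (1 - 2/real N))"
  proof -
    define f where "f = (\<lambda>k. (if k = m+1 then Jt * (1 - real a / real N^(m+1) - 1/real N) else Jt * (1 - 2/real N)))"
    have "sum f {m+1..n} = f (m+1) + sum f {Suc (m+1)..n}" using mn by (rule sum.atLeast_Suc_atMost)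
    also have "sum f {Suc (m+1)..n} = (\<Sum>k\<in>{Suc (m+1)..n}. Jt * (1 - 2/real N))"
      by (rule sum.cong) (auto simp: f_def)
    also have "\<dots> = real (n - (m+1)) * (Jt * (1 - 2/real N))" by simp
    finally show ?thesis unfolding f_def by simp
  qed
  moreover have "Jt * (real n - real m - real a / real N^(m+1) - 2 * real n / real N)
      \<le> Jt * (1 - real a / real N^(m+1) - 1/real N) + real (n - (m+1)) * (Jt * (1 - 2/real N))"
  proof -
    have e: "real (n - (m+1)) = real n - real m - 1" using mn by simp
    define x where "x = 1 / real N"
    define t where "t = real a / real N^(m+1)"
    have x0: "x \<ge> 0" unfolding x_def by simp
    have ex: "2 * real n / real N = 2 * real n * x" "2 / real N = 2 * x" unfolding x_def by simp_all
    have "(1 - t - x) + (real n - real m - 1) * (1 - 2 * x) = real n - real m - t - 2 * real n * x + (2 * real m + 1) * x"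
      by (simp add: algebra_simps)
    moreover have "(2 * real m + 1) * x \<ge> 0" using x0 by simp
    ultimately have "real n - real m - t - 2 * real n * x \<le> (1 - t - x) + (real n - real m - 1) * (1 - 2 * x)"
      by linarith
    then have "Jt * (real n - real m - t - 2 * real n * x) \<le> Jt * ((1 - t - x) + (real n - real m - 1) * (1 - 2 * x))"
      using Jt by (intro mult_left_mono) auto
    also have "\<dots> = Jt * (1 - t - x) + (real n - real m - 1) * (Jt * (1 - 2 * x))"
      by (simp add: algebra_simps)
    finally show ?thesis unfolding e ex t_def[symmetric] x_def[symmetric] .
  qed
  ultimately show ?thesis unfolding L_def a_def by linarith
qed

lemma E_lower:
  assumes N2: "N \<ge> 2" and AL: "A \<subseteq> lattice N n" and aM: "card A \<le> N^(m+1)"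
    and mn: "m + 1 \<le> n" and Jt: "Jt > 0"
  shows "Jt * real (card A) * (\<alpha> - real (card A) / real N^(m+1) - 2 * real n / real N)
    \<le> Ham N n (\<lambda>i. Jt / real N ^ i) (Jt * (real n - real m - \<alpha>)) A
       - Ham N n (\<lambda>i. Jt / real N ^ i) (Jt * (real n - real m - \<alpha>)) {}"
proof -
  define L where "L = lattice N n"
  have fA: "finite A" using AL by (rule finite_subset) simp
  have fB: "finite (L - A)" by (simp add: L_def)
  have "(\<Sum>(v,w)\<in>A \<times> (L - A). Jt / real N ^ hdist N v w) = (\<Sum>v\<in>A. \<Sum>w\<in>L - A. Jt / real N ^ hdist N v w)"
    by (rule sum.cartesian_product[symmetric])
  also have "\<dots> \<ge> (\<Sum>v\<in>A. Jt * (real n - real m - real (card A) / real N^(m+1) - 2 * real n / real N))"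
    by (rule sum_mono) (use inner_lower[OF N2 AL aM mn _ Jt] in \<open>simp add: L_def\<close>)
  finally have "real (card A) * (Jt * (real n - real m - real (card A) / real N^(m+1) - 2 * real n / real N))
     \<le> (\<Sum>(v,w)\<in>A \<times> (L - A). Jt / real N ^ hdist N v w)" by simp
  moreover have "Jt * real (card A) * (\<alpha> - real (card A) / real N^(m+1) - 2 * real n / real N)
     = real (card A) * (Jt * (real n - real m - real (card A) / real N^(m+1) - 2 * real n / real N))
       - Jt * (real n - real m - \<alpha>) * real (card A)"
    by (simp add: algebra_simps)
  ultimately show ?thesis using E_formula[OF AL, of "\<lambda>i. Jt / real N ^ i" "Jt * (real n - real m - \<alpha>)"]
    unfolding L_def by linarith
qed

lemma pair_count:
  assumes N2: "N \<ge> 2" and an: "a \<le> N^n"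
  shows "card {x \<in> {1..a} \<times> (lattice N n - {1..a}). hdist N (fst x) (snd x) \<le> k}
         \<le> (a mod N^k) * (N^k - a mod N^k)"
proof -
  define r where "r = a mod N^k"
  define Q where "Q = a div N^k"
  have pk: "N^k > 0" using N2 by simp
  have aQ: "a = Q * N^k + r" unfolding Q_def r_def by (rule div_mult_mod_eq[symmetric])
  have rlt: "r < N^k" unfolding r_def using pk by simp
  have sub: "{x \<in> {1..a} \<times> (lattice N n - {1..a}). hdist N (fst x) (snd x) \<le> k}
      \<subseteq> {a - r + 1..a} \<times> {a+1..a - r + N^k}"
  proof
    fix x assume xm: "x \<in> {x \<in> {1..a} \<times> (lattice N n - {1..a}). hdist N (fst x) (snd x) \<le> k}"
    obtain v w where x: "x = (v,w)" by fastforce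
    have v: "1 \<le> v" "v \<le> a" and w: "w \<ge> 1" "w > a" and d: "hdist N v w \<le> k"
      using xm x by (auto simp: lattice_def)
    have eq: "(v-1) div N^k = (w-1) div N^k" using hdist_le_iff[OF N2 v(1) w(1)] d by simp
    have "(v-1) div N^k \<le> a div N^k" using v by (intro div_le_mono) simp
    moreover have "a div N^k \<le> (w-1) div N^k" using w by (intro div_le_mono) simp
    ultimately have q: "(v-1) div N^k = Q" "(w-1) div N^k = Q" using eq Q_def by auto
    have "N^k * ((v-1) div N^k) \<le> v - 1" by simp
    then have "Q * N^k \<le> v - 1" using q(1) by (metis mult.commute)
    then have v2: "a - r + 1 \<le> v" using aQ v by linarith
    have "w - 1 = N^k * Q + (w-1) mod N^k" using q(2) by (metis div_mult_mod_eq mult.commute)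
    moreover have "(w-1) mod N^k < N^k" using pk by simp
    ultimately have "w - 1 < N^k * Q + N^k" using q by linarith
    then have w2: "w \<le> a - r + N^k" using aQ by (simp add: mult.commute)
    show "x \<in> {a - r + 1..a} \<times> {a+1..a - r + N^k}" using x v v2 w w2 by auto
  qed
  have "card ({a - r + 1..a} \<times> {a+1..a - r + N^k}) = r * (N^k - r)"
    using aQ rlt by (simp add: card_cartesian_product)
  then show ?thesis using card_mono[OF _ sub] r_def by simp
qed

lemma aux1: "(P::real) > 0 \<Longrightarrow> Jt / P * (x * (P - x)) = Jt * (x - x^2 / P)"
proof -
  assume P: "P > 0"
  have "x - x^2/P = (x * (P - x)) / P" using P by (simp add: power2_eq_square diff_divide_distrib right_diff_distrib)
  then show ?thesis by simp
qed

lemma quad_bound: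
  fixes r M \<alpha> :: real
  assumes "M > 0"
  shows "\<alpha> * r - r^2 / M \<le> \<alpha>^2 * M / 4"
proof -
  have "0 \<le> (r - \<alpha> * M / 2)^2 / M" using assms by simp
  also have "(r - \<alpha> * M / 2)^2 / M = r^2 / M - \<alpha> * r + \<alpha>^2 * M / 4"
    using assms by (simp add: power2_eq_square field_simps)
  finally show ?thesis by simp
qed

lemma E_upper:
  assumes N2: "N \<ge> 2" and an: "a \<le> N^n" and mn: "m + 1 \<le> n" and Jt: "Jt > 0"
    and al: "\<alpha> \<le> 1"
  shows "Ham N n (\<lambda>i. Jt / real N ^ i) (Jt * (real n - real m - \<alpha>)) {1..a}
       - Ham N n (\<lambda>i. Jt / real N ^ i) (Jt * (real n - real m - \<alpha>)) {}
     \<le> Jt * (real m * real N^m + \<alpha>^2 * real N^(m+1) / 4)"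
proof -
  define L where "L = lattice N n"
  define A where "A = {1..a}"
  define S where "S = A \<times> (L - A)"
  define d where "d = (\<lambda>x. hdist N (fst x) (snd x))"
  define r where "r = (\<lambda>k. a mod N^k)"
  define M where "M = real N^(m+1)"
  have Nr: "real N \<ge> 2" using N2 by simp
  have AL: "A \<subseteq> L" using an unfolding A_def L_def lattice_def by auto
  have fS: "finite S" unfolding S_def A_def L_def by simp
  have rk: "r k \<le> N^k" "r k \<le> a" for k unfolding r_def using N2 by (simp_all add: less_imp_le)
  have step1: "(\<Sum>x\<in>S. Jt / real N ^ d x) \<le> (\<Sum>x\<in>S. \<Sum>k\<in>{1..n}. if d x \<le> k then Jt / real N^k else 0)"
  proof (rule sum_mono)
    fix x assume "x \<in> S"
    then have xs: "fst x \<in> L" "snd x \<in> L" "fst x \<noteq> snd x" using AL unfolding S_def by auto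
    then have "1 \<le> d x" "d x \<le> n" unfolding d_def L_def
      using hdist_ge1[OF N2] hdist_len[OF N2] by (auto simp: lattice_def)
    then have mem: "d x \<in> {1..n}" by simp
    have "(if d x \<le> d x then Jt / real N^(d x) else 0) \<le> (\<Sum>k\<in>{1..n}. if d x \<le> k then Jt / real N^k else 0)"
      by (rule member_le_sum[OF mem]) (use Jt in auto)
    then show "Jt / real N ^ d x \<le> (\<Sum>k\<in>{1..n}. if d x \<le> k then Jt / real N^k else 0)" by simp
  qed
  have step2: "(\<Sum>x\<in>S. \<Sum>k\<in>{1..n}. if d x \<le> k then Jt / real N^k else 0)
     = (\<Sum>k\<in>{1..n}. Jt / real N^k * real (card {x \<in> S. d x \<le> k}))"
  proof -
    have "(\<Sum>x\<in>S. \<Sum>k\<in>{1..n}. if d x \<le> k then Jt / real N^k else 0)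
       = (\<Sum>k\<in>{1..n}. \<Sum>x\<in>S. if d x \<le> k then Jt / real N^k else 0)"
      by (rule sum.swap)
    also have "\<dots> = (\<Sum>k\<in>{1..n}. Jt / real N^k * real (card {x \<in> S. d x \<le> k}))"
    proof (rule sum.cong[OF refl])
      fix k
      have "(\<Sum>x\<in>S. if d x \<le> k then Jt / real N^k else 0) = (\<Sum>x\<in>{x \<in> S. d x \<le> k}. Jt / real N^k)"
        using fS by (subst sum.inter_filter) auto
      then show "(\<Sum>x\<in>S. if d x \<le> k then Jt / real N^k else 0) = Jt / real N^k * real (card {x \<in> S. d x \<le> k})"
        by simp
    qed
    finally show ?thesis .
  qed
  define b where "b = (\<lambda>k. if k \<le> m then Jt * real N^m
      else if k = m+1 then Jt * (real (r (m+1)) - real (r (m+1))^2 / M) else Jt * real a)"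
  have step3: "Jt / real N^k * real (card {x \<in> S. d x \<le> k}) \<le> b k" if k: "k \<in> {1..n}" for k
  proof -
    have Nk: "real N^k > 0" using N2 by simp
    have "card {x \<in> S. d x \<le> k} \<le> r k * (N^k - r k)"
      using pair_count[OF N2 an, of k] unfolding S_def A_def L_def d_def r_def by simp
    then have "real (card {x \<in> S. d x \<le> k}) \<le> real (r k) * (real N^k - real (r k))"
      using rk(1)[of k] by (metis of_nat_diff of_nat_le_iff of_nat_mult of_nat_power)
    then have g: "Jt / real N^k * real (card {x \<in> S. d x \<le> k}) \<le> Jt / real N^k * (real (r k) * (real N^k - real (r k)))"
      using Jt Nk by (intro mult_left_mono) auto
    have rr: "real (r k) \<le> real N^k" "real (r k) \<ge> 0" using rk(1)[of k] by (metis of_nat_le_iff of_nat_power, simp)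
    show ?thesis
    proof (cases "k \<le> m")
      case True
      have "real (r k) * (real N^k - real (r k)) \<le> real N^k * real N^k"
        using rr by (intro mult_mono) auto
      then have "Jt / real N^k * (real (r k) * (real N^k - real (r k))) \<le> Jt / real N^k * (real N^k * real N^k)"
        using Jt Nk by (intro mult_left_mono) auto
      also have "\<dots> = Jt * real N^k" using Nk by simp
      also have "\<dots> \<le> Jt * real N^m" using True Nr Jt by (intro mult_left_mono power_increasing) auto
      finally show ?thesis using g True unfolding b_def by simp
    next
      case False
      show ?thesis
      proof (cases "k = m+1")
        case True
        have "Jt / real N^k * (real (r k) * (real N^k - real (r k))) = Jt * (real (r (m+1)) - real (r (m+1))^2 / M)"
          unfolding M_def True using Nk True aux1[of "real N^(m+1)" Jt "real (r (m+1))"] by simp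
        then show ?thesis using g False True unfolding b_def by simp
      next
        case False2: False
        have "real (r k) * (real N^k - real (r k)) \<le> real a * real N^k"
          using rr rk(2)[of k] by (intro mult_mono) auto
        then have "Jt / real N^k * (real (r k) * (real N^k - real (r k))) \<le> Jt / real N^k * (real a * real N^k)"
          using Jt Nk by (intro mult_left_mono) auto
        also have "\<dots> = Jt * real a" using N2 by simp
        finally show ?thesis using g False False2 unfolding b_def by simp
      qed
    qed
  qed
  have step4: "(\<Sum>k\<in>{1..n}. b k) = real m * (Jt * real N^m) + Jt * (real (r (m+1)) - real (r (m+1))^2 / M)
      + real (n - (m+1)) * (Jt * real a)"
  proof -
    have un: "{1..n} = {1..m} \<union> {m+1..n}" using mn by auto
    have "(\<Sum>k\<in>{1..n}. b k) = (\<Sum>k\<in>{1..m}. b k) + (\<Sum>k\<in>{m+1..n}. b k)"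
      unfolding un by (rule sum.union_disjoint) auto
    also have "(\<Sum>k\<in>{1..m}. b k) = (\<Sum>k\<in>{1..m}. Jt * real N^m)"
      by (rule sum.cong) (auto simp: b_def)
    also have "(\<Sum>k\<in>{m+1..n}. b k) = b (m+1) + (\<Sum>k\<in>{Suc (m+1)..n}. b k)"
      using mn by (rule sum.atLeast_Suc_atMost)
    also have "(\<Sum>k\<in>{Suc (m+1)..n}. b k) = (\<Sum>k\<in>{Suc (m+1)..n}. Jt * real a)"
      by (rule sum.cong) (auto simp: b_def)
    finally show ?thesis by (simp add: b_def)
  qed
  have E: "Ham N n (\<lambda>i. Jt / real N ^ i) (Jt * (real n - real m - \<alpha>)) A
       - Ham N n (\<lambda>i. Jt / real N ^ i) (Jt * (real n - real m - \<alpha>)) {}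
       = (\<Sum>x\<in>S. Jt / real N ^ d x) - Jt * (real n - real m - \<alpha>) * real a"
    using E_formula[OF AL[unfolded L_def], of "\<lambda>i. Jt / real N ^ i" "Jt * (real n - real m - \<alpha>)"]
    unfolding S_def d_def L_def A_def by (simp add: split_beta)
  have tot: "(\<Sum>x\<in>S. Jt / real N ^ d x) \<le> real m * (Jt * real N^m) + Jt * (real (r (m+1)) - real (r (m+1))^2 / M)
      + real (n - (m+1)) * (Jt * real a)"
  proof -
    have "(\<Sum>k\<in>{1..n}. Jt / real N^k * real (card {x \<in> S. d x \<le> k})) \<le> (\<Sum>k\<in>{1..n}. b k)"
      by (rule sum_mono) (rule step3)
    then show ?thesis using step1 step2 step4 by linarith
  qed
  have Mp: "M > 0" unfolding M_def using N2 by simp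
  have ra: "real (r (m+1)) \<le> real a" using rk(2) by simp
  have e: "real (n - (m+1)) = real n - real m - 1" using mn by simp
  have "real (r (m+1)) - real (r (m+1))^2 / M - (1 - \<alpha>) * real a \<le> \<alpha> * real (r (m+1)) - real (r (m+1))^2 / M"
  proof -
    have "(1 - \<alpha>) * real (r (m+1)) \<le> (1 - \<alpha>) * real a" using ra al by (intro mult_left_mono) auto
    then show ?thesis by (simp add: algebra_simps)
  qed
  also have "\<dots> \<le> \<alpha>^2 * M / 4" by (rule quad_bound[OF Mp])
  finally have q: "real (r (m+1)) - real (r (m+1))^2 / M - (1 - \<alpha>) * real a \<le> \<alpha>^2 * M / 4" .
  have "real m * (Jt * real N^m) + Jt * (real (r (m+1)) - real (r (m+1))^2 / M)
      + real (n - (m+1)) * (Jt * real a) - Jt * (real n - real m - \<alpha>) * real a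
      = Jt * (real m * real N^m + (real (r (m+1)) - real (r (m+1))^2 / M - (1 - \<alpha>) * real a))"
    unfolding e by (simp add: algebra_simps)
  also have "\<dots> \<le> Jt * (real m * real N^m + \<alpha>^2 * M / 4)"
    using q Jt by (intro mult_left_mono) auto
  finally show ?thesis using E tot unfolding A_def M_def by linarith
qed

lemma list_ivt:
  fixes f :: "'a \<Rightarrow> nat"
  assumes "p \<noteq> []" "\<forall>i. Suc i < length p \<longrightarrow> f (p ! Suc i) \<le> f (p ! i) + 1"
    "f (hd p) \<le> a" "a \<le> f (last p)"
  shows "\<exists>C\<in>set p. f C = a"
  using assms
proof (induction p)
  case Nil then show ?case by simp
next
  case (Cons x xs)
  show ?case
  proof (cases "xs = []")
    case True
    then show ?thesis using Cons.prems by simp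
  next
    case False
    show ?thesis
    proof (cases "f x = a")
      case True then show ?thesis by simp
    next
      case ne: False
      have st: "\<forall>i. Suc i < length xs \<longrightarrow> f (xs ! Suc i) \<le> f (xs ! i) + 1"
      proof (intro allI impI)
        fix i assume "Suc i < length xs"
        then show "f (xs ! Suc i) \<le> f (xs ! i) + 1" using Cons.prems(2) by (metis Suc_less_eq length_Cons nth_Cons_Suc)
      qed
      have "f (xs ! 0) \<le> f ((x # xs) ! 0) + 1" using Cons.prems(2) False by (metis length_Cons length_greater_0_conv Suc_less_eq nth_Cons_Suc)
      then have "f (hd xs) \<le> a" using False ne Cons.prems(3) by (simp add: hd_conv_nth)
      moreover have "a \<le> f (last xs)" using Cons.prems(4) False by simp
      ultimately have "\<exists>C\<in>set xs. f C = a" using Cons.IH[OF False st] by simp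
      then show ?thesis by simp
    qed
  qed
qed

lemma path_step_card:
  assumes "is_path N n A B p" "Suc i < length p"
  shows "card (p ! Suc i) \<le> card (p ! i) + 1"
proof -
  obtain v where v: "p ! Suc i = p ! i - {v} \<union> ({v} - p ! i)"
    using assms unfolding is_path_def by blast
  have "p ! i \<in> set p" using assms(2) by simp
  then have fin: "finite (p ! i)" using assms(1) unfolding is_path_def
    by (meson finite_lattice finite_subset)
  have "card (p ! i - {v} \<union> ({v} - p ! i)) \<le> card (p ! i - {v}) + card ({v} - p ! i)"
    by (rule card_Un_le)
  also have "card (p ! i - {v}) \<le> card (p ! i)" using fin by (simp add: card_mono)
  also have "card ({v} - p ! i) \<le> 1" by (simp add: card_le_Suc0_iff_eq)
  finally show ?thesis using v by simp
qed

definition uppath :: "nat \<Rightarrow> nat \<Rightarrow> nat set list" where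
  "uppath N n = map (\<lambda>a. {1..a}) [0..<Suc (N^n)]"

lemma uppath_is_path: "is_path N n {} (lattice N n) (uppath N n)"
proof -
  have len: "length (uppath N n) = Suc (N^n)" by (simp add: uppath_def)
  have nth: "i < Suc (N^n) \<Longrightarrow> uppath N n ! i = {1..i}" for i
    by (simp add: uppath_def del: upt_Suc)
  show ?thesis unfolding is_path_def
  proof (intro conjI allI impI ballI)
    show "uppath N n \<noteq> []" using len by auto
    show "hd (uppath N n) = {}" using nth[of 0] len by (subst hd_conv_nth) auto
    show "last (uppath N n) = lattice N n" using nth[of "N^n"] len by (subst last_conv_nth) (auto simp: lattice_def)
  next
    fix C assume "C \<in> set (uppath N n)"
    then show "C \<subseteq> lattice N n" by (auto simp: uppath_def lattice_def)
  next
    fix i assume i: "Suc i < length (uppath N n)"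
    then have "uppath N n ! Suc i = uppath N n ! i - {Suc i} \<union> ({Suc i} - uppath N n ! i)"
      using nth[of i] nth[of "Suc i"] len by auto
    moreover have "Suc i \<in> lattice N n" using i len by (simp add: lattice_def)
    ultimately show "\<exists>v\<in>lattice N n. uppath N n ! Suc i = uppath N n ! i - {v} \<union> ({v} - uppath N n ! i)"
      by blast
  qed
qed

lemma Max_ge_hd:
  assumes "is_path N n A B p"
  shows "Ham N n J h A \<le> Max (Ham N n J h ` set p)"
proof -
  have "hd p \<in> set p" "hd p = A" using assms unfolding is_path_def by auto
  then show ?thesis by (intro Max_ge) auto
qed

lemma Gamma_upper:
  assumes N2: "N \<ge> 2" and mn: "m + 1 \<le> n" and Jt: "Jt > 0" and al: "\<alpha> \<le> 1"
  shows "Gamma_star N n (\<lambda>i. Jt / real N ^ i) (Jt * (real n - real m - \<alpha>))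
     \<le> Jt * (real m * real N^m + \<alpha>^2 * real N^(m+1) / 4)"
proof -
  define J where "J = (\<lambda>i. Jt / real N ^ i)"
  define h where "h = Jt * (real n - real m - \<alpha>)"
  define U where "U = Jt * (real m * real N^m + \<alpha>^2 * real N^(m+1) / 4)"
  define SS where "SS = {Max (Ham N n J h ` set p) | p. is_path N n {} (lattice N n) p}"
  have bdd: "bdd_below SS"
    unfolding SS_def by (rule bdd_belowI[of _ "Ham N n J h {}"]) (auto intro: Max_ge_hd)
  have mem: "Max (Ham N n J h ` set (uppath N n)) \<in> SS"
    unfolding SS_def using uppath_is_path by blast
  have "Max (Ham N n J h ` set (uppath N n)) \<le> Ham N n J h {} + U"
  proof (subst Max_le_iff)
    show "finite (Ham N n J h ` set (uppath N n))" by simp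
    show "Ham N n J h ` set (uppath N n) \<noteq> {}" by (simp add: uppath_def)
    show "\<forall>a\<in>Ham N n J h ` set (uppath N n). a \<le> Ham N n J h {} + U"
    proof
      fix x assume "x \<in> Ham N n J h ` set (uppath N n)"
      then obtain C where C: "C \<in> set (uppath N n)" "x = Ham N n J h C" by blast
      from C(1) have "C \<in> (\<lambda>a. {1..a}) ` {0..<Suc (N^n)}" by (simp add: uppath_def del: upt_Suc)
      then obtain a where "a \<in> {0..<Suc (N^n)}" "C = {1..a}" by blast
      then have a: "a \<le> N^n" "x = Ham N n J h {1..a}" using C by auto
      show "x \<le> Ham N n J h {} + U"
        using E_upper[OF N2 a(1) mn Jt al] a(2) unfolding J_def h_def U_def by simp
    qed
  qed
  moreover have "Phi N n J h {} (lattice N n) \<le> Max (Ham N n J h ` set (uppath N n))"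
    unfolding Phi_def SS_def[symmetric] using bdd mem by (rule cInf_lower[rotated])
  ultimately show ?thesis unfolding Gamma_star_def J_def[symmetric] h_def[symmetric] U_def[symmetric] by simp
qed

lemma Gamma_lower:
  assumes N2: "N \<ge> 2" and mn: "m + 1 \<le> n" and Jt: "Jt > 0" and a0: "a0 \<le> N^(m+1)"
  shows "Jt * real a0 * (\<alpha> - real a0 / real N^(m+1) - 2 * real n / real N)
     \<le> Gamma_star N n (\<lambda>i. Jt / real N ^ i) (Jt * (real n - real m - \<alpha>))"
proof -
  define J where "J = (\<lambda>i. Jt / real N ^ i)"
  define h where "h = Jt * (real n - real m - \<alpha>)"
  define Lo where "Lo = Jt * real a0 * (\<alpha> - real a0 / real N^(m+1) - 2 * real n / real N)"
  define SS where "SS = {Max (Ham N n J h ` set p) | p. is_path N n {} (lattice N n) p}"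
  have ne: "SS \<noteq> {}" unfolding SS_def using uppath_is_path by blast
  have a0n: "a0 \<le> N^n" using a0 N2 mn by (meson order.trans power_increasing one_le_numeral le_trans less_imp_le_nat Suc_le_eq numeral_le_iff semiring_norm(69) order_trans)
  have "Ham N n J h {} + Lo \<le> Phi N n J h {} (lattice N n)"
    unfolding Phi_def SS_def[symmetric]
  proof (rule cInf_greatest[OF ne])
    fix x assume "x \<in> SS"
    then obtain p where p: "is_path N n {} (lattice N n) p" "x = Max (Ham N n J h ` set p)"
      unfolding SS_def by blast
    have "\<exists>C\<in>set p. card C = a0"
    proof (rule list_ivt)
      show "p \<noteq> []" using p unfolding is_path_def by simp
      show "\<forall>i. Suc i < length p \<longrightarrow> card (p ! Suc i) \<le> card (p ! i) + 1"
        using path_step_card[OF p(1)] by blast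
      show "card (hd p) \<le> a0" using p unfolding is_path_def by simp
      show "a0 \<le> card (last p)" using p a0n unfolding is_path_def by (simp add: lattice_def)
    qed
    then obtain C where C: "C \<in> set p" "card C = a0" by blast
    have CL: "C \<subseteq> lattice N n" using p C unfolding is_path_def by blast
    have "Ham N n J h {} + Lo \<le> Ham N n J h C"
      using E_lower[OF N2 CL _ mn Jt, of \<alpha>] C a0 unfolding J_def h_def Lo_def by simp
    also have "\<dots> \<le> x" using p C by (simp add: Max_ge)
    finally show "Ham N n J h {} + Lo \<le> x" .
  qed
  then show ?thesis unfolding Gamma_star_def J_def[symmetric] h_def[symmetric] Lo_def[symmetric] by simp
qed

theorem corollary1p12:
  fixes n m :: nat and Jt \<alpha> :: real
  assumes "n \<ge> 1" and "Jt > 0" and "m \<le> n - 1" and "0 < \<alpha>" and "\<alpha> < 1"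
  shows "(\<lambda>N::nat. Gamma_star N n (\<lambda>i. Jt / real N ^ i) (Jt * (real n - real m - \<alpha>)))
           \<sim>[at_top] (\<lambda>N::nat. Jt / 4 * \<alpha>\<^sup>2 * real N ^ (m + 1))"
proof -
  have Jt: "Jt > 0" and a0: "0 < \<alpha>" and a1: "\<alpha> < 1" using assms by auto
  have mn: "m + 1 \<le> n" using assms by linarith
  define g where "g = (\<lambda>N::nat. Jt / 4 * \<alpha>\<^sup>2 * real N ^ (m + 1))"
  define f where "f = (\<lambda>N::nat. Gamma_star N n (\<lambda>i. Jt / real N ^ i) (Jt * (real n - real m - \<alpha>)))"
  define lo where "lo = (\<lambda>N::nat. (1 - 2/\<alpha> * (1 / real N)) * (1 - 4 * real n / \<alpha> * (1 / real N)))"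
  define up where "up = (\<lambda>N::nat. 1 + 4 * real m / \<alpha>\<^sup>2 * (1 / real N))"
  have lo_lim: "lo \<longlonglongrightarrow> 1"
  proof -
    have "lo \<longlonglongrightarrow> (1 - 2/\<alpha> * 0) * (1 - 4 * real n / \<alpha> * 0)"
      unfolding lo_def by (intro tendsto_intros)
    then show ?thesis by simp
  qed
  have up_lim: "up \<longlonglongrightarrow> 1"
  proof -
    have "up \<longlonglongrightarrow> 1 + 4 * real m / \<alpha>\<^sup>2 * 0"
      unfolding up_def by (intro tendsto_intros)
    then show ?thesis by simp
  qed
  have bounds: "lo N \<le> f N / g N \<and> f N / g N \<le> up N" if N2: "N \<ge> 2" and Nb: "real N \<ge> 4 * real n / \<alpha>" for N
  proof -
    define M where "M = real N ^ (m+1)"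
    have Nr: "real N \<ge> 2" using N2 by simp
    have MN: "M = real N * real N ^ m" unfolding M_def by simp
    have Mge: "M \<ge> real N" unfolding MN using Nr by (simp add: one_le_power)
    have gpos: "g N > 0" unfolding g_def using Jt a0 N2 by simp
    have gM: "g N = Jt / 4 * \<alpha>\<^sup>2 * M" unfolding g_def M_def ..
    have fU: "f N \<le> Jt * (real m * real N^m + \<alpha>^2 * M / 4)"
      unfolding f_def M_def using Gamma_upper[OF N2 mn Jt, of \<alpha>] a1 by simp
    have "up N * g N = Jt * (real m * real N^m + \<alpha>^2 * M / 4)"
    proof -
      have "up N * g N = g N + 4 * real m / \<alpha>\<^sup>2 * (1 / real N) * (Jt / 4 * \<alpha>\<^sup>2 * (real N * real N ^ m))"
        unfolding up_def gM MN by (simp add: algebra_simps)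
      also have "4 * real m / \<alpha>\<^sup>2 * (1 / real N) * (Jt / 4 * \<alpha>\<^sup>2 * (real N * real N ^ m)) = Jt * real m * real N^m"
        using a0 Nr by (simp add: field_simps)
      finally show ?thesis unfolding gM by (simp add: algebra_simps)
    qed
    then have up: "f N / g N \<le> up N" using fU gpos by (simp add: pos_divide_le_eq)
    define a where "a = nat \<lfloor>\<alpha> * M / 2\<rfloor>"
    have Mpos: "M > 0" unfolding M_def using N2 by simp
    have ra: "real a = of_int \<lfloor>\<alpha> * M / 2\<rfloor>" unfolding a_def using a0 Mpos by simp
    have aup: "real a \<le> \<alpha> * M / 2" unfolding ra by (rule of_int_floor_le)
    have alo: "real a \<ge> \<alpha> * M / 2 - 1" unfolding ra using real_of_int_floor_add_one_gt[of "\<alpha> * M / 2"] by linarith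
    have aM: "a \<le> N^(m+1)"
    proof -
      have "\<alpha> * M \<le> 1 * M" using a1 Mpos by (intro mult_right_mono) auto
      then have "real a \<le> M" using aup Mpos by linarith
      then show ?thesis unfolding M_def by (metis of_nat_le_iff of_nat_power)
    qed
    have Lo: "Jt * real a * (\<alpha> - real a / M - 2 * real n / real N) \<le> f N"
      using Gamma_lower[OF N2 mn Jt aM, of \<alpha>] unfolding f_def M_def by simp
    have X0: "\<alpha> / 2 - 2 * real n / real N \<ge> 0"
    proof -
      have "4 * real n \<le> \<alpha> * real N" using Nb a0 by (simp add: field_simps)
      then have "2 * real n / real N \<le> \<alpha> / 2" using Nr by (simp add: field_simps)
      then show ?thesis by simp
    qed
    have "real a / M \<le> \<alpha> / 2" using aup Mpos by (simp add: field_simps)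
    then have "\<alpha> / 2 - 2 * real n / real N \<le> \<alpha> - real a / M - 2 * real n / real N" by simp
    then have "Jt * real a * (\<alpha> / 2 - 2 * real n / real N) \<le> Jt * real a * (\<alpha> - real a / M - 2 * real n / real N)"
      using Jt by (intro mult_left_mono) auto
    moreover have "Jt * (\<alpha> * M / 2 - 1) * (\<alpha> / 2 - 2 * real n / real N) \<le> Jt * real a * (\<alpha> / 2 - 2 * real n / real N)"
      using alo X0 Jt by (intro mult_right_mono mult_left_mono) auto
    moreover have "Jt * (\<alpha> * M / 2 - 1) * (\<alpha> / 2 - 2 * real n / real N)
        = g N * ((1 - 2/\<alpha> * (1 / M)) * (1 - 4 * real n / \<alpha> * (1 / real N)))"
      unfolding gM using a0 Mpos Nr by (simp add: field_simps power2_eq_square)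
    moreover have "g N * lo N \<le> g N * ((1 - 2/\<alpha> * (1 / M)) * (1 - 4 * real n / \<alpha> * (1 / real N)))"
    proof -
      have "1 / M \<le> 1 / real N" using Mge Nr by (simp add: frac_le)
      then have "2/\<alpha> * (1 / M) \<le> 2/\<alpha> * (1 / real N)" using a0 by (intro mult_left_mono) auto
      then have "1 - 2/\<alpha> * (1 / real N) \<le> 1 - 2/\<alpha> * (1 / M)" by linarith
      moreover have "1 - 4 * real n / \<alpha> * (1 / real N) \<ge> 0"
      proof -
        have "(4 * real n / \<alpha>) / real N \<le> 1"
          using pos_divide_le_eq[of "real N" "4 * real n / \<alpha>" 1] Nb Nr by linarith
        then show ?thesis by simp
      qed
      ultimately show ?thesis unfolding lo_def using gpos
        by (intro mult_left_mono mult_right_mono) auto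
    qed
    ultimately have "g N * lo N \<le> f N" using Lo by linarith
    then have "lo N \<le> f N / g N" using gpos by (simp add: pos_le_divide_eq mult.commute)
    with up show ?thesis by simp
  qed
  have ev: "eventually (\<lambda>N. lo N \<le> f N / g N \<and> f N / g N \<le> up N) at_top"
  proof (rule eventually_at_top_linorder[THEN iffD2])
    show "\<exists>N0. \<forall>N\<ge>N0. lo N \<le> f N / g N \<and> f N / g N \<le> up N"
    proof (intro exI allI impI)
      fix N assume N: "N \<ge> nat \<lceil>4 * real n / \<alpha>\<rceil> + 2"
      then have "N \<ge> 2" by simp
      moreover have "real N \<ge> 4 * real n / \<alpha>" using N by linarith
      ultimately show "lo N \<le> f N / g N \<and> f N / g N \<le> up N" by (rule bounds)
    qed
  qed
  have "(\<lambda>N. f N / g N) \<longlonglongrightarrow> 1"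
    by (rule tendsto_sandwich[OF _ _ lo_lim up_lim]) (use ev in \<open>auto elim: eventually_mono\<close>)
  then show ?thesis unfolding f_def g_def by (rule asymp_equivI')
qed

end
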